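(* Let $(\sigma_t)_{t\in\mathbb R}$ be a stochastic process with càdlàg or càglàd sample paths that is uniformly bounded on $[-\delta,\infty)$ by a deterministic constant, for some $\delta>0$. Let $k\in\mathbb N$ and $t>0$. Then for any $\alpha,q\in(0,\infty)$ and any deterministic sequence $(a_n)_{n\ge1}$ with $a_n\to0$, $$\lim_{\varepsilon\to0}\Big[\limsup_{n\to\infty}\Big(\frac1n\sum_{i=k}^{\lfloor nt\rfloor}\|v_\sigma(i/n,\varepsilon+a_n)\|_q^\alpha\Big)\Big]=0.$$
   Context: The modulus of continuity is $v_\sigma(s,\eta)=\sup\{|\sigma_s-\sigma_r|:r\in[s-\eta,s+\eta]\}$, and $\|Y\|_q=\mathbb E[|Y|^q]^{1/q}$. *)

theory Defs
  imports "HOL-Probability.Probability"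
begin

definition cadlag :: "(real \<Rightarrow> real) \<Rightarrow> bool" where
  "cadlag f \<longleftrightarrow> (\<forall>t. continuous (at_right t) f \<and> (\<exists>l. (f \<longlongrightarrow> l) (at_left t)))"

definition caglad :: "(real \<Rightarrow> real) \<Rightarrow> bool" where
  "caglad f \<longleftrightarrow> (\<forall>t. continuous (at_left t) f \<and> (\<exists>l. (f \<longlongrightarrow> l) (at_right t)))"

text \<open>The value 0 is added to the set, which changes nothing for
  eta >= 0 (r = s gives 0) and fixes the convention sup {} = 0 for eta < 0.\<close>
definition modcont :: "(real \<Rightarrow> 'a \<Rightarrow> real) \<Rightarrow> real \<Rightarrow> real \<Rightarrow> 'a \<Rightarrow> real" where
  "modcont \<sigma> s \<eta> \<omega> = Sup ({0} \<union> {\<bar>\<sigma> s \<omega> - \<sigma> r \<omega>\<bar> | r. r \<in> {s - \<eta>..s + \<eta>}})"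

definition Lq_norm :: "'a measure \<Rightarrow> real \<Rightarrow> ('a \<Rightarrow> real) \<Rightarrow> real" where
  "Lq_norm M q Y = (enn2real (\<integral>\<^sup>+ \<omega>. ennreal (\<bar>Y \<omega>\<bar> powr q) \<partial>M)) powr (1 / q)"

end

theory Submission
  imports Defs
begin



definition mc :: "(real \<Rightarrow> real) \<Rightarrow> real \<Rightarrow> real \<Rightarrow> real" where
  "mc x s \<eta> = Sup ({0} \<union> {\<bar>x s - x r\<bar> | r. r \<in> {s-\<eta>..s+\<eta>}})"

lemma modcont_mc: "modcont \<sigma> s \<eta> \<omega> = mc (\<lambda>r. \<sigma> r \<omega>) s \<eta>"
  unfolding modcont_def mc_def by simp

lemma mc_bdd:
  fixes x :: "real \<Rightarrow> real"
  assumes B: "\<And>r. r \<ge> -\<delta> \<Longrightarrow> \<bar>x r\<bar> \<le> C" and "s \<ge> 0" "\<eta> \<le> \<delta>" "\<delta> > 0"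
  shows "bdd_above ({0} \<union> {\<bar>x s - x r\<bar> | r. r \<in> {s-\<eta>..s+\<eta>}})"
proof -
  have "-\<delta> \<le> s" using assms(2,4) by linarith
  then have xs: "\<bar>x s\<bar> \<le> C" by (rule B)
  { fix r assume "r \<in> {s-\<eta>..s+\<eta>}"
    then have "\<bar>x r\<bar> \<le> C" using B assms by auto
    then have "\<bar>x s - x r\<bar> \<le> 2*C" using xs by linarith }
  moreover have "0 \<le> 2*C" using xs by linarith
  ultimately show ?thesis unfolding bdd_above_def by (intro exI[of _ "2*C"]) auto
qed

lemma mc_upper:
  assumes B: "\<And>r. r \<ge> -\<delta> \<Longrightarrow> \<bar>x r\<bar> \<le> C" and "s \<ge> 0" "\<eta> \<le> \<delta>" "\<delta> > 0"
    and "r \<in> {s-\<eta>..s+\<eta>}"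
  shows "\<bar>x s - x r\<bar> \<le> mc x s \<eta>"
  unfolding mc_def using mc_bdd[OF assms(1-4)] assms(5) by (intro cSup_upper) auto

lemma mc_nonneg:
  assumes B: "\<And>r. r \<ge> -\<delta> \<Longrightarrow> \<bar>x r\<bar> \<le> C" and "s \<ge> 0" "\<eta> \<le> \<delta>" "\<delta> > 0"
  shows "0 \<le> mc x s \<eta>"
  unfolding mc_def using mc_bdd[OF assms(1-4)] by (intro cSup_upper) auto

lemma mc_le:
  assumes "0 \<le> e" "\<And>r. r \<in> {s-\<eta>..s+\<eta>} \<Longrightarrow> \<bar>x s - x r\<bar> \<le> e"
  shows "mc x s \<eta> \<le> e"
  unfolding mc_def using assms by (intro cSup_least) auto

lemma mc_le2C:
  assumes B: "\<And>r. r \<ge> -\<delta> \<Longrightarrow> \<bar>x r\<bar> \<le> C" and "s \<ge> 0" "\<eta> \<le> \<delta>" "\<delta> > 0"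
  shows "mc x s \<eta> \<le> 2*C"
proof (rule mc_le)
  have "-\<delta> \<le> s" using assms(2,4) by linarith
  then have xs: "\<bar>x s\<bar> \<le> C" by (rule B)
  then show "0 \<le> 2*C" by linarith
  fix r assume "r \<in> {s-\<eta>..s+\<eta>}"
  then have "\<bar>x r\<bar> \<le> C" using B assms by auto
  then show "\<bar>x s - x r\<bar> \<le> 2*C" using xs by linarith
qed

lemma mc_mono:
  assumes B: "\<And>r. r \<ge> -\<delta> \<Longrightarrow> \<bar>x r\<bar> \<le> C" and "s \<ge> 0" "\<eta>' \<le> \<delta>" "\<delta> > 0" "\<eta> \<le> \<eta>'"
  shows "mc x s \<eta> \<le> mc x s \<eta>'"
  unfolding mc_def
proof (rule cSup_subset_mono)
  show "bdd_above ({0} \<union> {\<bar>x s - x r\<bar> | r. r \<in> {s-\<eta>'..s+\<eta>'}})"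
    by (rule mc_bdd[OF assms(1-4)])
  show "{0} \<union> {\<bar>x s - x r\<bar> |r. r \<in> {s - \<eta>..s + \<eta>}} \<subseteq> {0} \<union> {\<bar>x s - x r\<bar> |r. r \<in> {s - \<eta>'..s + \<eta>'}}"
    using assms(5) by auto
qed auto

lemma osc_local:
  fixes x :: "real \<Rightarrow> real" and s e :: real
  assumes lim: "\<And>s. (\<exists>l. (x \<longlongrightarrow> l) (at_left s)) \<and> (\<exists>l. (x \<longlongrightarrow> l) (at_right s))"
    and e: "e > 0"
  shows "\<exists>\<rho>>0. (\<forall>u r. s-\<rho><u \<and> u<s \<and> s-\<rho><r \<and> r<s \<longrightarrow> \<bar>x u - x r\<bar> \<le> e)
            \<and> (\<forall>u r. s<u \<and> u<s+\<rho> \<and> s<r \<and> r<s+\<rho> \<longrightarrow> \<bar>x u - x r\<bar> \<le> e)"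
proof -
  obtain l1 l2 where l1: "(x \<longlongrightarrow> l1) (at_left s)" and l2: "(x \<longlongrightarrow> l2) (at_right s)"
    using lim by blast
  have "eventually (\<lambda>u. dist (x u) l1 < e/2) (at_left s)"
    using l1 e unfolding tendsto_iff by (meson half_gt_zero)
  then obtain b1 where b1: "b1 < s" "\<And>u. b1 < u \<Longrightarrow> u < s \<Longrightarrow> dist (x u) l1 < e/2"
    unfolding eventually_at_left_field by blast
  have "eventually (\<lambda>u. dist (x u) l2 < e/2) (at_right s)"
    using l2 e unfolding tendsto_iff by (meson half_gt_zero)
  then obtain b2 where b2: "b2 > s" "\<And>u. s < u \<Longrightarrow> u < b2 \<Longrightarrow> dist (x u) l2 < e/2"
    unfolding eventually_at_right_field by blast
  define \<rho> where "\<rho> = min (s - b1) (b2 - s)"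
  have "\<rho> > 0" using b1 b2 unfolding \<rho>_def by auto
  moreover
  { fix u r assume "s-\<rho><u" "u<s" "s-\<rho><r" "r<s"
    then have "dist (x u) l1 < e/2" "dist (x r) l1 < e/2" using b1 unfolding \<rho>_def by auto
    then have "\<bar>x u - x r\<bar> \<le> e" unfolding dist_real_def by linarith }
  moreover
  { fix u r assume "s<u" "u<s+\<rho>" "s<r" "r<s+\<rho>"
    then have "dist (x u) l2 < e/2" "dist (x r) l2 < e/2" using b2 unfolding \<rho>_def by auto
    then have "\<bar>x u - x r\<bar> \<le> e" unfolding dist_real_def by linarith }
  ultimately show ?thesis by blast
qed

lemma detD:
  fixes x :: "real \<Rightarrow> real" and e T :: real
  assumes lim: "\<And>s. (\<exists>l. (x \<longlongrightarrow> l) (at_left s)) \<and> (\<exists>l. (x \<longlongrightarrow> l) (at_right s))"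
    and e: "e > 0"
  shows "\<exists>\<eta>0>0. \<exists>J. finite J \<and> (\<forall>s\<in>{0..T}. \<forall>\<eta><\<eta>0. (\<forall>j\<in>J. \<eta> < \<bar>s - j\<bar>) \<longrightarrow>
            (\<forall>r\<in>{s-\<eta>..s+\<eta>}. \<bar>x s - x r\<bar> \<le> e))"
proof -
  have "\<forall>s. \<exists>\<rho>>0. (\<forall>u r. s-\<rho><u \<and> u<s \<and> s-\<rho><r \<and> r<s \<longrightarrow> \<bar>x u - x r\<bar> \<le> e)
            \<and> (\<forall>u r. s<u \<and> u<s+\<rho> \<and> s<r \<and> r<s+\<rho> \<longrightarrow> \<bar>x u - x r\<bar> \<le> e)"
    using osc_local[OF lim e] by blast
  then obtain \<rho> where \<rho>: "\<And>s. \<rho> s > 0"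
    "\<And>s u r. s-\<rho> s<u \<Longrightarrow> u<s \<Longrightarrow> s-\<rho> s<r \<Longrightarrow> r<s \<Longrightarrow> \<bar>x u - x r\<bar> \<le> e"
    "\<And>s u r. s<u \<Longrightarrow> u<s+\<rho> s \<Longrightarrow> s<r \<Longrightarrow> r<s+\<rho> s \<Longrightarrow> \<bar>x u - x r\<bar> \<le> e"
    by metis
  have cov: "{0..T} \<subseteq> \<Union> ((\<lambda>s. ball s (\<rho> s)) ` {0..T})" using \<rho>(1) by force
  obtain D where D: "D \<subseteq> {0..T}" "finite D" "{0..T} \<subseteq> \<Union> ((\<lambda>s. ball s (\<rho> s)) ` D)"
    using compactE_image[OF compact_Icc _ cov] by blast
  obtain e0 where e0: "e0 > 0" "\<And>s. s \<in> {0..T} \<Longrightarrow> \<exists>G\<in>(\<lambda>s. ball s (\<rho> s)) ` D. ball s e0 \<subseteq> G"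
    using Heine_Borel_lemma[OF compact_Icc D(3)] by blast
  have "\<forall>s\<in>{0..T}. \<forall>\<eta><e0. (\<forall>j\<in>D. \<eta> < \<bar>s - j\<bar>) \<longrightarrow> (\<forall>r\<in>{s-\<eta>..s+\<eta>}. \<bar>x s - x r\<bar> \<le> e)"
  proof (intro ballI allI impI)
    fix s \<eta> r assume s: "s \<in> {0..T}" and \<eta>: "\<eta> < e0" and sep: "\<forall>j\<in>D. \<eta> < \<bar>s - j\<bar>"
      and r: "r \<in> {s-\<eta>..s+\<eta>}"
    obtain s0 where s0: "s0 \<in> D" "ball s e0 \<subseteq> ball s0 (\<rho> s0)" using e0(2)[OF s] by blast
    have "s \<in> ball s e0" using e0(1) by simp
    then have "s \<in> ball s0 (\<rho> s0)" using s0(2) by blast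
    moreover have "r \<in> ball s e0" using r \<eta> by (auto simp: dist_real_def)
    then have "r \<in> ball s0 (\<rho> s0)" using s0(2) by blast
    ultimately have in1: "\<bar>s - s0\<bar> < \<rho> s0" "\<bar>r - s0\<bar> < \<rho> s0" by (auto simp: dist_real_def)
    have sp: "\<eta> < \<bar>s - s0\<bar>" using sep s0(1) by blast
    show "\<bar>x s - x r\<bar> \<le> e"
    proof (cases "s0 < s")
      case True
      then have "s0 < r" "s0 < s" using sp r by auto
      then show ?thesis using \<rho>(3)[of s0 s r] in1 by auto
    next
      case False
      then have "r < s0" "s < s0" using sp r by auto
      then show ?thesis using \<rho>(2)[of s0 s r] in1 by auto
    qed
  qed
  then show ?thesis using e0(1) D(2) by blast
qed




lemma approx_right:
  fixes x :: "real \<Rightarrow> real"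
  assumes "continuous (at_right r) x" "r < hi" "\<And>u. u \<in> \<rat> \<Longrightarrow> r < u \<Longrightarrow> u < hi \<Longrightarrow> \<bar>x s - x u\<bar> \<le> c"
  shows "\<bar>x s - x r\<bar> \<le> c"
proof (rule ccontr)
  assume A: "\<not> \<bar>x s - x r\<bar> \<le> c"
  define \<epsilon> where "\<epsilon> = \<bar>x s - x r\<bar> - c"
  have "\<epsilon> > 0" using A unfolding \<epsilon>_def by linarith
  have "(x \<longlongrightarrow> x r) (at_right r)" using assms(1) by (simp add: continuous_within)
  then have "eventually (\<lambda>u. dist (x u) (x r) < \<epsilon>) (at_right r)"
    using \<open>\<epsilon> > 0\<close> unfolding tendsto_iff by blast
  then obtain b where b: "b > r" "\<And>u. r < u \<Longrightarrow> u < b \<Longrightarrow> dist (x u) (x r) < \<epsilon>"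
    unfolding eventually_at_right_field by blast
  obtain u where u: "u \<in> \<rat>" "r < u" "u < min b hi" using Rats_dense_in_real[of r "min b hi"] b assms(2) by auto
  have "\<bar>x s - x u\<bar> \<le> c" using assms(3) u by auto
  moreover have "\<bar>x u - x r\<bar> < \<epsilon>" using b(2)[of u] u by (auto simp: dist_real_def)
  ultimately show False unfolding \<epsilon>_def by linarith
qed

lemma approx_left:
  fixes x :: "real \<Rightarrow> real"
  assumes "continuous (at_left r) x" "lo < r" "\<And>u. u \<in> \<rat> \<Longrightarrow> lo < u \<Longrightarrow> u < r \<Longrightarrow> \<bar>x s - x u\<bar> \<le> c"
  shows "\<bar>x s - x r\<bar> \<le> c"
proof (rule ccontr)
  assume A: "\<not> \<bar>x s - x r\<bar> \<le> c"
  define \<epsilon> where "\<epsilon> = \<bar>x s - x r\<bar> - c"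
  have "\<epsilon> > 0" using A unfolding \<epsilon>_def by linarith
  have "(x \<longlongrightarrow> x r) (at_left r)" using assms(1) by (simp add: continuous_within)
  then have "eventually (\<lambda>u. dist (x u) (x r) < \<epsilon>) (at_left r)"
    using \<open>\<epsilon> > 0\<close> unfolding tendsto_iff by blast
  then obtain b where b: "b < r" "\<And>u. b < u \<Longrightarrow> u < r \<Longrightarrow> dist (x u) (x r) < \<epsilon>"
    unfolding eventually_at_left_field by blast
  obtain u where u: "u \<in> \<rat>" "max b lo < u" "u < r" using Rats_dense_in_real[of "max b lo" r] b assms(2) by auto
  have "\<bar>x s - x u\<bar> \<le> c" using assms(3) u by auto
  moreover have "\<bar>x u - x r\<bar> < \<epsilon>" using b(2)[of u] u by (auto simp: dist_real_def)
  ultimately show False unfolding \<epsilon>_def by linarith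
qed

lemma mc_measurable:
  fixes \<sigma> :: "real \<Rightarrow> 'a \<Rightarrow> real"
  assumes meas: "\<And>s. \<sigma> s \<in> borel_measurable M"
    and paths: "(\<forall>\<omega>\<in>space M. cadlag (\<lambda>s. \<sigma> s \<omega>)) \<or> (\<forall>\<omega>\<in>space M. caglad (\<lambda>s. \<sigma> s \<omega>))"
    and B: "\<And>s \<omega>. s \<ge> -\<delta> \<Longrightarrow> \<omega> \<in> space M \<Longrightarrow> \<bar>\<sigma> s \<omega>\<bar> \<le> C"
    and s: "s \<ge> 0" and \<eta>: "\<eta> \<le> \<delta>" and \<delta>: "\<delta> > 0"
  shows "(\<lambda>\<omega>. mc (\<lambda>r. \<sigma> r \<omega>) s \<eta>) \<in> borel_measurable M"
proof (cases "\<eta> < 0")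
  case True
  then have "\<And>\<omega>. mc (\<lambda>r. \<sigma> r \<omega>) s \<eta> = 0" unfolding mc_def by auto
  then show ?thesis by simp
next
  case False
  define D where "D = insert (s-\<eta>) (insert (s+\<eta>) (\<rat> \<inter> {s-\<eta>..s+\<eta>}))"
  have cD: "countable D" unfolding D_def by (simp add: countable_rat)
  have DI: "D \<subseteq> {s-\<eta>..s+\<eta>}" using False unfolding D_def by auto
  have key: "mc (\<lambda>r. \<sigma> r \<omega>) s \<eta> \<le> c \<longleftrightarrow> (\<forall>r\<in>D. \<bar>\<sigma> s \<omega> - \<sigma> r \<omega>\<bar> \<le> c \<and> 0 \<le> c)"
    if \<omega>: "\<omega> \<in> space M" for \<omega> c
  proof
    have Bx: "\<And>r. r \<ge> -\<delta> \<Longrightarrow> \<bar>\<sigma> r \<omega>\<bar> \<le> C" using B \<omega> by auto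
    assume le: "mc (\<lambda>r. \<sigma> r \<omega>) s \<eta> \<le> c"
    have "0 \<le> c" using mc_nonneg[of \<delta> "\<lambda>r. \<sigma> r \<omega>" C s \<eta>, OF Bx s \<eta> \<delta>] le by linarith
    moreover have "\<forall>r\<in>D. \<bar>\<sigma> s \<omega> - \<sigma> r \<omega>\<bar> \<le> c"
      using mc_upper[of \<delta> "\<lambda>r. \<sigma> r \<omega>" C s \<eta>, OF Bx s \<eta> \<delta>] le DI by force
    ultimately show "\<forall>r\<in>D. \<bar>\<sigma> s \<omega> - \<sigma> r \<omega>\<bar> \<le> c \<and> 0 \<le> c" by blast
  next
    assume H: "\<forall>r\<in>D. \<bar>\<sigma> s \<omega> - \<sigma> r \<omega>\<bar> \<le> c \<and> 0 \<le> c"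
    then have c0: "0 \<le> c" unfolding D_def by auto
    have HQ: "\<And>u. u \<in> \<rat> \<Longrightarrow> s-\<eta> \<le> u \<Longrightarrow> u \<le> s+\<eta> \<Longrightarrow> \<bar>\<sigma> s \<omega> - \<sigma> u \<omega>\<bar> \<le> c"
      using H unfolding D_def by auto
    show "mc (\<lambda>r. \<sigma> r \<omega>) s \<eta> \<le> c"
    proof (rule mc_le[OF c0])
      fix r assume r: "r \<in> {s-\<eta>..s+\<eta>}"
      show "\<bar>\<sigma> s \<omega> - \<sigma> r \<omega>\<bar> \<le> c"
        using paths
      proof
        assume "\<forall>\<omega>\<in>space M. cadlag (\<lambda>s. \<sigma> s \<omega>)"
        then have rc: "continuous (at_right r) (\<lambda>s. \<sigma> s \<omega>)" using \<omega> unfolding cadlag_def by blast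
        show ?thesis
        proof (cases "r = s + \<eta>")
          case True then show ?thesis using H unfolding D_def by auto
        next
          case False
          then have "r < s+\<eta>" using r by auto
          then show ?thesis using approx_right[OF rc, where hi="s+\<eta>" and s=s and c=c] HQ r by auto
        qed
      next
        assume "\<forall>\<omega>\<in>space M. caglad (\<lambda>s. \<sigma> s \<omega>)"
        then have rc: "continuous (at_left r) (\<lambda>s. \<sigma> s \<omega>)" using \<omega> unfolding caglad_def by blast
        show ?thesis
        proof (cases "r = s - \<eta>")
          case True then show ?thesis using H unfolding D_def by auto
        next
          case False
          then have "s-\<eta> < r" using r by auto
          then show ?thesis using approx_left[OF rc, where lo="s-\<eta>" and s=s and c=c] HQ r by auto
        qed
      qed
    qed
  qed
  show ?thesis
  proof (subst borel_measurable_iff_le, intro allI)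
    fix c
    have "{w \<in> space M. mc (\<lambda>r. \<sigma> r w) s \<eta> \<le> c} = {w \<in> space M. \<forall>r\<in>D. \<bar>\<sigma> s w - \<sigma> r w\<bar> \<le> c \<and> 0 \<le> c}"
      using key by blast
    also have "\<dots> \<in> sets M"
    proof (rule sets.sets_Collect_countable_All'[OF _ cD])
      fix r
      have [measurable]: "\<sigma> s \<in> borel_measurable M" "\<sigma> r \<in> borel_measurable M" using meas by auto
      show "{w \<in> space M. \<bar>\<sigma> s w - \<sigma> r w\<bar> \<le> c \<and> 0 \<le> c} \<in> sets M" by measurable
    qed
    finally show "{w \<in> space M. mc (\<lambda>r. \<sigma> r w) s \<eta> \<le> c} \<in> sets M" .
  qed
qed

lemma card_nat_interval:
  fixes S :: "nat set"
  assumes "finite S" "\<And>i. i \<in> S \<Longrightarrow> a \<le> real i \<and> real i \<le> b"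
  shows "real (card S) \<le> \<bar>b - a\<bar> + 1"
proof (cases "S = {}")
  case True then show ?thesis by simp
next
  case False
  have "S \<subseteq> {Min S..Max S}" using assms(1) by auto
  then have "card S \<le> card {Min S..Max S}" by (rule card_mono[rotated]) auto
  also have "\<dots> = Max S + 1 - Min S" by simp
  finally have c: "real (card S) \<le> real (Max S) + 1 - real (Min S)"
    using Min_le[OF assms(1), of "Max S"] Max_in[OF assms(1) False] by linarith
  have "a \<le> real (Min S)" "real (Max S) \<le> b" using assms(2) Min_in[OF assms(1) False] Max_in[OF assms(1) False] by auto
  then show ?thesis using c by linarith
qed




lemma pathwise:
  fixes x :: "real \<Rightarrow> real" and a :: "nat \<Rightarrow> real"
  assumes lim: "\<And>s. (\<exists>l. (x \<longlongrightarrow> l) (at_left s)) \<and> (\<exists>l. (x \<longlongrightarrow> l) (at_right s))"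
    and B: "\<And>r. r \<ge> -\<delta> \<Longrightarrow> \<bar>x r\<bar> \<le> C" and \<delta>: "\<delta> > 0" and t: "t > 0" and q: "q > 0"
    and a: "a \<longlonglongrightarrow> 0" and \<gamma>: "\<gamma> > 0"
  shows "\<exists>\<epsilon>1>0. \<exists>N1. \<forall>\<epsilon>. 0 < \<epsilon> \<longrightarrow> \<epsilon> \<le> \<epsilon>1 \<longrightarrow> (\<forall>n\<ge>N1.
     (\<Sum>i=k..nat \<lfloor>real n * t\<rfloor>. \<bar>mc x (real i / real n) (\<epsilon> + a n)\<bar> powr q) \<le> real n * \<gamma>)"
proof -
  have C0: "0 \<le> C" using B[of 0] \<delta> by linarith
  define Bq where "Bq = (2*C) powr q"
  have Bq0: "0 \<le> Bq" unfolding Bq_def by simp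
  define e where "e = (\<gamma>/(2*(t+1))) powr (1/q)"
  have e0: "e > 0" unfolding e_def using \<gamma> t by simp
  have eq: "e powr q = \<gamma>/(2*(t+1))" unfolding e_def using \<gamma> t q by (simp add: powr_powr)
  obtain \<eta>0 J where \<eta>0: "\<eta>0 > 0" and J: "finite J"
    and det: "\<And>s \<eta> r. s\<in>{0..t} \<Longrightarrow> \<eta> < \<eta>0 \<Longrightarrow> (\<forall>j\<in>J. \<eta> < \<bar>s - j\<bar>) \<Longrightarrow> r\<in>{s-\<eta>..s+\<eta>} \<Longrightarrow> \<bar>x s - x r\<bar> \<le> e"
    using detD[OF lim e0, of t] by blast
  define K where "K = real (card J)"
  have K0: "0 \<le> K" unfolding K_def by simp
  define \<epsilon>1 where "\<epsilon>1 = min (min (\<eta>0/4) (\<delta>/2)) (\<gamma>/(16*(K*Bq+1)))"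
  have KB0: "0 \<le> K*Bq" using K0 Bq0 by simp
  have \<epsilon>1: "\<epsilon>1 > 0" unfolding \<epsilon>1_def using \<eta>0 \<delta> \<gamma> KB0 by simp
  have \<epsilon>1b: "4 * (K*Bq) * \<epsilon>1 \<le> \<gamma>/4"
  proof -
    have "4 * (K*Bq) * \<epsilon>1 \<le> 4 * (K*Bq) * (\<gamma>/(16*(K*Bq+1)))"
      unfolding \<epsilon>1_def using KB0 by (intro mult_left_mono) auto
    also have "\<dots> = (\<gamma>/4) * ((K*Bq)/(K*Bq+1))" using KB0 by (simp add: field_simps)
    also have "\<dots> \<le> (\<gamma>/4) * 1" using KB0 \<gamma> by (intro mult_left_mono) auto
    finally show ?thesis by simp
  qed
  obtain N1a where N1a: "\<And>n. n \<ge> N1a \<Longrightarrow> \<bar>a n\<bar> < \<epsilon>1"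
    using a \<epsilon>1 unfolding tendsto_iff eventually_sequentially dist_real_def by force
  define N1b where "N1b = nat \<lceil>4*(K*Bq)/\<gamma>\<rceil> + 1"
  define N1 where "N1 = max N1a N1b"
  have "\<forall>\<epsilon>. 0 < \<epsilon> \<longrightarrow> \<epsilon> \<le> \<epsilon>1 \<longrightarrow> (\<forall>n\<ge>N1.
     (\<Sum>i=k..nat \<lfloor>real n * t\<rfloor>. \<bar>mc x (real i / real n) (\<epsilon> + a n)\<bar> powr q) \<le> real n * \<gamma>)"
  proof (intro allI impI)
    fix \<epsilon> n assume \<epsilon>: "0 < \<epsilon>" "\<epsilon> \<le> \<epsilon>1" and n: "N1 \<le> n"
    define \<eta> where "\<eta> = \<epsilon> + a n"
    have an: "\<bar>a n\<bar> < \<epsilon>1" using N1a n unfolding N1_def by auto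
    have \<eta>abs: "\<bar>\<eta>\<bar> \<le> 2*\<epsilon>1" unfolding \<eta>_def using an \<epsilon> by linarith
    have \<eta>\<eta>0: "\<eta> < \<eta>0" using \<eta>abs unfolding \<epsilon>1_def using \<eta>0 by linarith
    have \<eta>\<delta>: "\<eta> \<le> \<delta>" using \<eta>abs unfolding \<epsilon>1_def using \<delta> by linarith
    have nN1b: "n \<ge> N1b" using n unfolding N1_def by auto
    then have n1: "n \<ge> 1" unfolding N1b_def by auto
    then have npos: "real n > 0" by simp
    have nbig: "K*Bq \<le> real n * (\<gamma>/4)"
    proof -
      have "4*(K*Bq)/\<gamma> \<le> real (nat \<lceil>4*(K*Bq)/\<gamma>\<rceil>)" by (rule real_nat_ceiling_ge)
      also have "\<dots> \<le> real n" using nN1b unfolding N1b_def by linarith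
      finally have "4*(K*Bq)/\<gamma> \<le> real n" .
      then show ?thesis using \<gamma> by (simp add: field_simps)
    qed
    define I where "I = {k..nat \<lfloor>real n * t\<rfloor>}"
    define Bad where "Bad = {i\<in>I. \<exists>j\<in>J. \<bar>real i / real n - j\<bar> \<le> \<eta>}"
    define f where "f i = \<bar>mc x (real i / real n) \<eta>\<bar> powr q" for i
    have fin: "finite I" unfolding I_def by simp
    have BadI: "Bad \<subseteq> I" unfolding Bad_def by auto
    have nt0: "0 \<le> real n * t" using npos t by simp
    have fl: "real (nat \<lfloor>real n * t\<rfloor>) \<le> real n * t"
    proof -
      have "real (nat \<lfloor>real n * t\<rfloor>) = real_of_int \<lfloor>real n * t\<rfloor>" using nt0 by simp
      also have "\<dots> \<le> real n * t" by (rule of_int_floor_le)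
      finally show ?thesis .
    qed
    have sI: "real i / real n \<in> {0..t}" if "i \<in> I" for i
    proof -
      have "i \<le> nat \<lfloor>real n * t\<rfloor>" using that unfolding I_def by simp
      then have "real i \<le> real (nat \<lfloor>real n * t\<rfloor>)" by simp
      then have "real i \<le> real n * t" using fl by linarith
      then show ?thesis using npos by (simp add: field_simps)
    qed
    have mcb: "0 \<le> mc x (real i / real n) \<eta> \<and> mc x (real i / real n) \<eta> \<le> 2*C" if "i \<in> I" for i
      using mc_nonneg[OF B _ \<eta>\<delta> \<delta>] mc_le2C[OF B _ \<eta>\<delta> \<delta>] sI[OF that] by auto
    have fbad: "f i \<le> Bq" if "i \<in> I" for i
      unfolding f_def Bq_def using mcb[OF that] q by (intro powr_mono2) auto
    have fgood: "f i \<le> e powr q" if "i \<in> I - Bad" for i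
    proof -
      have sep: "\<forall>j\<in>J. \<eta> < \<bar>real i / real n - j\<bar>" using that unfolding Bad_def by force
      have "mc x (real i / real n) \<eta> \<le> e"
        using det[OF sI[of i] \<eta>\<eta>0 sep] that e0 by (intro mc_le) auto
      then show ?thesis unfolding f_def using mcb that q by (intro powr_mono2) auto
    qed
    have "sum f I = sum f (I - Bad) + sum f Bad" using fin BadI by (metis sum.subset_diff)
    also have "\<dots> \<le> real (card (I - Bad)) * e powr q + real (card Bad) * Bq"
      using fgood fbad BadI by (intro add_mono sum_bounded_above) auto
    also have "\<dots> \<le> real (card I) * e powr q + real (card Bad) * Bq"
      using fin Bq0 by (intro add_mono mult_right_mono) (auto simp: card_mono)
    finally have S1: "sum f I \<le> real (card I) * e powr q + real (card Bad) * Bq" .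
    have cI: "real (card I) \<le> real n * t + 1"
    proof -
      have "card I \<le> nat \<lfloor>real n * t\<rfloor> + 1" unfolding I_def by simp
      then have "real (card I) \<le> real (nat \<lfloor>real n * t\<rfloor>) + 1" by linarith
      then show ?thesis using fl by linarith
    qed
    have cB: "real (card Bad) \<le> K * (2*\<bar>\<eta>\<bar>*real n + 1)"
    proof -
      have "Bad \<subseteq> (\<Union>j\<in>J. {i\<in>I. \<bar>real i / real n - j\<bar> \<le> \<eta>})" unfolding Bad_def by auto
      then have "card Bad \<le> card (\<Union>j\<in>J. {i\<in>I. \<bar>real i / real n - j\<bar> \<le> \<eta>})"
        using fin J by (intro card_mono) auto
      also have "\<dots> \<le> (\<Sum>j\<in>J. card {i\<in>I. \<bar>real i / real n - j\<bar> \<le> \<eta>})" using J by (rule card_UN_le)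
      finally have "real (card Bad) \<le> real (\<Sum>j\<in>J. card {i\<in>I. \<bar>real i / real n - j\<bar> \<le> \<eta>})"
        by (simp only: of_nat_le_iff)
      also have "\<dots> = (\<Sum>j\<in>J. real (card {i\<in>I. \<bar>real i / real n - j\<bar> \<le> \<eta>}))"
        by (rule of_nat_sum)
      also have "\<dots> \<le> (\<Sum>j\<in>J. 2*\<bar>\<eta>\<bar>*real n + 1)"
      proof (rule sum_mono)
        fix j assume "j \<in> J"
        have "real (card {i\<in>I. \<bar>real i / real n - j\<bar> \<le> \<eta>}) \<le> \<bar>real n*(j+\<eta>) - real n*(j-\<eta>)\<bar> + 1"
        proof (rule card_nat_interval)
          show "finite {i\<in>I. \<bar>real i / real n - j\<bar> \<le> \<eta>}" using fin by simp
          fix i assume "i \<in> {i\<in>I. \<bar>real i / real n - j\<bar> \<le> \<eta>}"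
          then have h: "\<bar>real i / real n - j\<bar> \<le> \<eta>" by simp
          have "real i / real n \<le> j + \<eta>" "j - \<eta> \<le> real i / real n" using h by linarith+
          then show "real n*(j-\<eta>) \<le> real i \<and> real i \<le> real n*(j+\<eta>)" using npos
            by (simp add: field_simps)
        qed
        also have "\<dots> = 2*\<bar>\<eta>\<bar>*real n + 1" using npos by (simp add: algebra_simps abs_mult)
        finally show "real (card {i\<in>I. \<bar>real i / real n - j\<bar> \<le> \<eta>}) \<le> 2*\<bar>\<eta>\<bar>*real n + 1" .
      qed
      also have "\<dots> = K * (2*\<bar>\<eta>\<bar>*real n + 1)" unfolding K_def by simp
      finally show ?thesis .
    qed
    have "sum f I \<le> (real n * t + 1) * e powr q + K * (2*\<bar>\<eta>\<bar>*real n + 1) * Bq"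
    proof -
      have "real (card I) * e powr q \<le> (real n * t + 1) * e powr q" using cI by (intro mult_right_mono) auto
      moreover have "real (card Bad) * Bq \<le> K * (2*\<bar>\<eta>\<bar>*real n + 1) * Bq" using cB Bq0 by (intro mult_right_mono) auto
      ultimately show ?thesis using S1 by linarith
    qed
    also have "\<dots> = real n * t * e powr q + e powr q + 2*\<bar>\<eta>\<bar>*(K*Bq)*real n + K*Bq"
      by (simp add: algebra_simps)
    also have "\<dots> \<le> real n * (\<gamma>/2) + real n * (\<gamma>/4) + real n * (\<gamma>/4)"
    proof -
      have "real n * t * e powr q + e powr q \<le> real n * t * e powr q + real n * e powr q"
      proof -
        have "1 * e powr q \<le> real n * e powr q" using n1 by (intro mult_right_mono) auto
        then show ?thesis by simp
      qed
      also have "\<dots> = real n * ((t+1) * e powr q)" by (simp add: algebra_simps)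
      also have "\<dots> = real n * (\<gamma>/2)"
      proof -
        have "(t+1) * e powr q = \<gamma>/2" using eq t by (simp add: field_simps)
        then show ?thesis by simp
      qed
      finally have 1: "real n * t * e powr q + e powr q \<le> real n * (\<gamma>/2)" .
      have "2*\<bar>\<eta>\<bar>*(K*Bq) \<le> 2*(2*\<epsilon>1)*(K*Bq)" using \<eta>abs KB0 by (intro mult_right_mono) auto
      also have "\<dots> \<le> \<gamma>/4" using \<epsilon>1b by (simp add: algebra_simps)
      finally have "2*\<bar>\<eta>\<bar>*(K*Bq)*real n \<le> (\<gamma>/4) * real n" using npos by (intro mult_right_mono) auto
      then show ?thesis using 1 nbig by (simp add: algebra_simps)
    qed
    also have "\<dots> = real n * \<gamma>" by (simp add: algebra_simps)
    finally show "(\<Sum>i=k..nat \<lfloor>real n * t\<rfloor>. \<bar>mc x (real i / real n) (\<epsilon> + a n)\<bar> powr q) \<le> real n * \<gamma>"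
      unfolding f_def I_def \<eta>_def .
  qed
  then show ?thesis using \<epsilon>1 by blast
qed




lemma powr_split:
  fixes x B l p :: real
  assumes "0 \<le> x" "x \<le> B" "l > 0" "p > 0"
  shows "x powr p \<le> l powr p + (x/l) * B powr p"
proof (cases "x \<le> l")
  case True
  then have "x powr p \<le> l powr p" using assms by (intro powr_mono2) auto
  moreover have "0 \<le> (x/l) * B powr p" using assms by simp
  ultimately show ?thesis by linarith
next
  case False
  then have "1 \<le> x/l" using assms by simp
  have "x powr p \<le> B powr p" using assms by (intro powr_mono2) auto
  also have "\<dots> = 1 * B powr p" by simp
  also have "\<dots> \<le> (x/l) * B powr p" using \<open>1 \<le> x/l\<close> by (intro mult_right_mono) auto
  finally show ?thesis by (smt (verit) powr_ge_zero)
qed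

theorem lemma4p9:
  fixes M :: "'a measure" and \<sigma> :: "real \<Rightarrow> 'a \<Rightarrow> real"
    and \<delta> C t \<alpha> q :: real and k :: nat and a :: "nat \<Rightarrow> real"
  assumes "prob_space M"
    and "\<And>s. \<sigma> s \<in> borel_measurable M"
    and "(\<forall>\<omega>\<in>space M. cadlag (\<lambda>s. \<sigma> s \<omega>)) \<or> (\<forall>\<omega>\<in>space M. caglad (\<lambda>s. \<sigma> s \<omega>))"
    and "\<delta> > 0"
    and "\<And>s \<omega>. s \<ge> - \<delta> \<Longrightarrow> \<omega> \<in> space M \<Longrightarrow> \<bar>\<sigma> s \<omega>\<bar> \<le> C"
    and "t > 0" and "\<alpha> > 0" and "q > 0"
    and "a \<longlonglongrightarrow> 0"
  shows "((\<lambda>\<epsilon>. limsup (\<lambda>n. ereal ((1 / real n) *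
            (\<Sum>i = k..nat \<lfloor>real n * t\<rfloor>.
               (Lq_norm M q (modcont \<sigma> (real i / real n) (\<epsilon> + a n))) powr \<alpha>))))
          \<longlongrightarrow> 0) (at_right 0)"
proof -
  note PS = assms(1) and meas = assms(2) and paths = assms(3) and \<delta> = assms(4) and Bd = assms(5)
    and t = assms(6) and \<alpha> = assms(7) and q = assms(8) and a = assms(9)
  interpret P: prob_space M by (rule PS)
  obtain \<omega>0 where "\<omega>0 \<in> space M" using P.not_empty by blast
  then have C0: "0 \<le> C" using Bd[of 0 \<omega>0] \<delta> by force
  define Bq where "Bq = (2*C) powr q"
  have Bq0: "0 \<le> Bq" unfolding Bq_def by simp
  define I where "I n = {k..nat \<lfloor>real n * t\<rfloor>}" for n :: nat
  define F where "F s \<eta> \<omega> = \<bar>mc (\<lambda>r. \<sigma> r \<omega>) s \<eta>\<bar> powr q" for s \<eta> \<omega>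
  define Qf where "Qf s \<eta> = enn2real (\<integral>\<^sup>+ \<omega>. ennreal (F s \<eta> \<omega>) \<partial>M)" for s \<eta>
  define Y where "Y n \<epsilon> \<omega> = (1 / real n) * (\<Sum>i\<in>I n. F (real i / real n) (\<epsilon> + a n) \<omega>)" for n \<epsilon> \<omega>
  have Bx: "\<And>r. r \<ge> -\<delta> \<Longrightarrow> \<bar>\<sigma> r \<omega>\<bar> \<le> C" if "\<omega> \<in> space M" for \<omega> using Bd that by auto
  have Fmeas: "(F s \<eta>) \<in> borel_measurable M" if "s \<ge> 0" "\<eta> \<le> \<delta>" for s \<eta>
  proof -
    have [measurable]: "(\<lambda>\<omega>. mc (\<lambda>r. \<sigma> r \<omega>) s \<eta>) \<in> borel_measurable M"
      using mc_measurable[OF meas paths Bd that \<delta>] .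
    show ?thesis unfolding F_def by measurable
  qed
  have Fbd: "0 \<le> F s \<eta> \<omega> \<and> F s \<eta> \<omega> \<le> Bq" if "s \<ge> 0" "\<eta> \<le> \<delta>" "\<omega> \<in> space M" for s \<eta> \<omega>
  proof -
    have "0 \<le> mc (\<lambda>r. \<sigma> r \<omega>) s \<eta>" "mc (\<lambda>r. \<sigma> r \<omega>) s \<eta> \<le> 2*C"
      using mc_nonneg[OF Bx[OF that(3)] that(1,2) \<delta>] mc_le2C[OF Bx[OF that(3)] that(1,2) \<delta>] by auto
    then show ?thesis unfolding F_def Bq_def using q by (auto intro: powr_mono2)
  qed
  have Fmono: "F s \<eta> \<omega> \<le> F s \<eta>' \<omega>" if "s \<ge> 0" "\<eta>' \<le> \<delta>" "\<eta> \<le> \<eta>'" "\<omega> \<in> space M" for s \<eta> \<eta>' \<omega>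
  proof -
    have "0 \<le> mc (\<lambda>r. \<sigma> r \<omega>) s \<eta>" using mc_nonneg[OF Bx[OF that(4)] that(1)] that(2,3) \<delta> by auto
    moreover have "mc (\<lambda>r. \<sigma> r \<omega>) s \<eta> \<le> mc (\<lambda>r. \<sigma> r \<omega>) s \<eta>'"
      using mc_mono[OF Bx[OF that(4)] that(1,2) \<delta> that(3)] .
    ultimately show ?thesis unfolding F_def using q by (auto intro: powr_mono2)
  qed
  have Fint: "integrable M (F s \<eta>)" if "s \<ge> 0" "\<eta> \<le> \<delta>" for s \<eta>
    using Fbd[OF that] Fmeas[OF that] by (intro P.integrable_const_bound[where B=Bq]) auto
  have Qf_eq: "Qf s \<eta> = integral\<^sup>L M (F s \<eta>)" if "s \<ge> 0" "\<eta> \<le> \<delta>" for s \<eta>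
  proof -
    have "(\<integral>\<^sup>+ \<omega>. ennreal (F s \<eta> \<omega>) \<partial>M) = ennreal (integral\<^sup>L M (F s \<eta>))"
      using Fint[OF that] Fbd[OF that] by (intro nn_integral_eq_integral) auto
    moreover have "0 \<le> integral\<^sup>L M (F s \<eta>)" using Fbd[OF that] by (intro integral_nonneg_AE) auto
    ultimately show ?thesis unfolding Qf_def by simp
  qed
  have Qf_bd: "0 \<le> Qf s \<eta> \<and> Qf s \<eta> \<le> Bq" if "s \<ge> 0" "\<eta> \<le> \<delta>" for s \<eta>
  proof -
    have "integral\<^sup>L M (F s \<eta>) \<le> integral\<^sup>L M (\<lambda>_. Bq)"
      using Fint[OF that] Fbd[OF that] by (intro integral_mono) auto
    moreover have "0 \<le> integral\<^sup>L M (F s \<eta>)" using Fbd[OF that] by (intro integral_nonneg_AE) auto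
    ultimately show ?thesis using Qf_eq[OF that] by (simp add: P.prob_space)
  qed
  have sI: "0 \<le> real i / real n" for i n by simp
  have cardI: "real (card (I n)) \<le> real n * t + 1" for n
  proof -
    have nt0: "0 \<le> real n * t" using t by simp
    have "real (nat \<lfloor>real n * t\<rfloor>) = real_of_int \<lfloor>real n * t\<rfloor>" using nt0 by simp
    also have "\<dots> \<le> real n * t" by (rule of_int_floor_le)
    finally have fl: "real (nat \<lfloor>real n * t\<rfloor>) \<le> real n * t" .
    have "card (I n) \<le> nat \<lfloor>real n * t\<rfloor> + 1" unfolding I_def by simp
    then have "real (card (I n)) \<le> real (nat \<lfloor>real n * t\<rfloor>) + 1" by linarith
    then show ?thesis using fl by linarith
  qed
  have cardI2: "real (card (I n)) / real n \<le> t + 1" if "n \<ge> 1" for n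
  proof -
    have "real (card (I n)) \<le> real n * (t + 1)" using cardI[of n] that by (simp add: algebra_simps)
    then show ?thesis using that by (simp add: field_simps)
  qed
  obtain M0 where M0: "\<And>n. n \<ge> M0 \<Longrightarrow> \<bar>a n\<bar> < \<delta>/2"
    using a \<delta> unfolding tendsto_iff eventually_sequentially dist_real_def by (metis half_gt_zero diff_zero)
  have Ymeas: "Y n \<epsilon> \<in> borel_measurable M" if "n \<ge> M0" "\<epsilon> \<le> \<delta>/2" for n \<epsilon>
  proof -
    have "\<epsilon> + a n \<le> \<delta>" using M0[OF that(1)] that(2) by linarith
    then have [measurable]: "\<And>i. F (real i / real n) (\<epsilon> + a n) \<in> borel_measurable M"
      using Fmeas by simp
    show ?thesis unfolding Y_def by measurable
  qed
  have Yint: "integrable M (Y n \<epsilon>)" if "n \<ge> M0" "\<epsilon> \<le> \<delta>/2" for n \<epsilon>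
  proof -
    have "\<epsilon> + a n \<le> \<delta>" using M0[OF that(1)] that(2) by linarith
    then show ?thesis unfolding Y_def using Fint by auto
  qed
  have Ymono: "Y n \<epsilon> \<omega> \<le> Y n \<epsilon>' \<omega>" if "n \<ge> M0" "\<epsilon>' \<le> \<delta>/2" "\<epsilon> \<le> \<epsilon>'" "\<omega> \<in> space M" for n \<epsilon> \<epsilon>' \<omega>
  proof -
    have "\<epsilon>' + a n \<le> \<delta>" using M0[OF that(1)] that(2) by linarith
    then show ?thesis unfolding Y_def using that
      by (intro mult_left_mono sum_mono Fmono) auto
  qed
  have Ybd: "Y n \<epsilon> \<omega> \<le> (t+1) * Bq" if "n \<ge> M0" "n \<ge> 1" "\<epsilon> \<le> \<delta>/2" "\<omega> \<in> space M" for n \<epsilon> \<omega>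
  proof -
    have "\<epsilon> + a n \<le> \<delta>" using M0[OF that(1)] that(3) by linarith
    then have "(\<Sum>i\<in>I n. F (real i / real n) (\<epsilon> + a n) \<omega>) \<le> real (card (I n)) * Bq"
      using Fbd that by (intro sum_bounded_above) auto
    then have "Y n \<epsilon> \<omega> \<le> (1 / real n) * (real (card (I n)) * Bq)"
      unfolding Y_def by (intro mult_left_mono) auto
    also have "\<dots> = (real (card (I n)) / real n) * Bq" by simp
    also have "\<dots> \<le> (t+1) * Bq" using cardI2[OF that(2)] Bq0 by (intro mult_right_mono) auto
    finally show ?thesis .
  qed
  have sumQ: "(1 / real n) * (\<Sum>i\<in>I n. Qf (real i / real n) (\<epsilon> + a n)) = integral\<^sup>L M (Y n \<epsilon>)"
    if "n \<ge> M0" "\<epsilon> \<le> \<delta>/2" for n \<epsilon>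
  proof -
    have "\<epsilon> + a n \<le> \<delta>" using M0[OF that(1)] that(2) by linarith
    then have "(\<Sum>i\<in>I n. Qf (real i / real n) (\<epsilon> + a n)) = (\<Sum>i\<in>I n. integral\<^sup>L M (F (real i / real n) (\<epsilon> + a n)))"
      using Qf_eq by simp
    also have "\<dots> = integral\<^sup>L M (\<lambda>\<omega>. \<Sum>i\<in>I n. F (real i / real n) (\<epsilon> + a n) \<omega>)"
      by (rule Bochner_Integration.integral_sum[where f="\<lambda>i. F (real i / real n) (\<epsilon> + a n)", symmetric])
        (use Fint \<open>\<epsilon> + a n \<le> \<delta>\<close> in auto)
    finally show ?thesis unfolding Y_def by simp
  qed
  have claimE: "\<exists>\<epsilon>0>0. \<exists>N. \<forall>\<epsilon>. 0 < \<epsilon> \<longrightarrow> \<epsilon> < \<epsilon>0 \<longrightarrow> (\<forall>n\<ge>N. n \<ge> 1 \<and> \<epsilon> + a n \<le> \<delta> \<and>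
      (1 / real n) * (\<Sum>i\<in>I n. Qf (real i / real n) (\<epsilon> + a n)) \<le> 2*g)" if g: "g > 0" for g
  proof -
    define d where "d m = \<delta> / (2 * (real m + 1))" for m :: nat
    have d0: "0 < d m" for m unfolding d_def using \<delta> by simp
    have d2: "d m \<le> \<delta>/2" for m unfolding d_def using \<delta> by (simp add: field_simps)
    have dmono: "d m' \<le> d m" if "m \<le> m'" for m m' unfolding d_def using \<delta> that
      by (intro divide_left_mono) auto
    define A where "A m = {\<omega>\<in>space M. \<forall>n. m + M0 \<le> n \<longrightarrow> Y n (d m) \<omega> \<le> g}" for m
    have Asets: "A m \<in> sets M" for m
      unfolding A_def
    proof (rule sets.sets_Collect_countable_All)
      fix n
      show "{\<omega> \<in> space M. m + M0 \<le> n \<longrightarrow> Y n (d m) \<omega> \<le> g} \<in> sets M"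
      proof (cases "m + M0 \<le> n")
        case True
        then have [measurable]: "Y n (d m) \<in> borel_measurable M" using Ymeas d2 by simp
        show ?thesis using True by measurable
      next
        case False then show ?thesis by simp
      qed
    qed
    have Ainc: "incseq A"
    proof (rule monoI, rule subsetI)
      fix m m' \<omega> assume mm: "m \<le> m'" and w: "\<omega> \<in> A m"
      have "Y n (d m') \<omega> \<le> g" if "m' + M0 \<le> n" for n
      proof -
        have "Y n (d m') \<omega> \<le> Y n (d m) \<omega>" using w that mm d2 dmono[OF mm] unfolding A_def
          by (intro Ymono) auto
        also have "\<dots> \<le> g" using w that mm unfolding A_def by auto
        finally show ?thesis .
      qed
      then show "\<omega> \<in> A m'" using w unfolding A_def by auto
    qed
    have Aun: "(\<Union>m. A m) = space M"
    proof
      show "(\<Union>m. A m) \<subseteq> space M" unfolding A_def by auto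
      show "space M \<subseteq> (\<Union>m. A m)"
      proof
        fix \<omega> assume w: "\<omega> \<in> space M"
        have lim: "(\<exists>l. ((\<lambda>r. \<sigma> r \<omega>) \<longlongrightarrow> l) (at_left s)) \<and> (\<exists>l. ((\<lambda>r. \<sigma> r \<omega>) \<longlongrightarrow> l) (at_right s))" for s
          using paths
        proof
          assume "\<forall>\<omega>\<in>space M. cadlag (\<lambda>s. \<sigma> s \<omega>)"
          then have "cadlag (\<lambda>s. \<sigma> s \<omega>)" using w by blast
          then show ?thesis unfolding cadlag_def continuous_within by blast
        next
          assume "\<forall>\<omega>\<in>space M. caglad (\<lambda>s. \<sigma> s \<omega>)"
          then have "caglad (\<lambda>s. \<sigma> s \<omega>)" using w by blast
          then show ?thesis unfolding caglad_def continuous_within by blast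
        qed
        obtain \<epsilon>1 N1 where \<epsilon>1: "\<epsilon>1 > 0" and HP: "\<And>\<epsilon> n. 0 < \<epsilon> \<Longrightarrow> \<epsilon> \<le> \<epsilon>1 \<Longrightarrow> n \<ge> N1 \<Longrightarrow>
            (\<Sum>i=k..nat \<lfloor>real n * t\<rfloor>. \<bar>mc (\<lambda>r. \<sigma> r \<omega>) (real i / real n) (\<epsilon> + a n)\<bar> powr q) \<le> real n * g"
          using pathwise[OF lim Bx[OF w] \<delta> t q a g, of k] by blast
        define m where "m = max N1 (nat \<lceil>\<delta> / (2*\<epsilon>1)\<rceil>)"
        have "\<delta> / (2*\<epsilon>1) \<le> real m" unfolding m_def
          by (metis (no_types, opaque_lifting) max.cobounded2 of_nat_le_iff order_trans real_nat_ceiling_ge)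
        then have "\<delta> \<le> 2*\<epsilon>1*(real m + 1)" using \<epsilon>1 by (simp add: field_simps)
        then have dm: "d m \<le> \<epsilon>1" unfolding d_def using \<epsilon>1 by (simp add: field_simps)
        have "Y n (d m) \<omega> \<le> g" if "m + M0 \<le> n" for n
        proof -
          have nN1: "n \<ge> N1" using that unfolding m_def by auto
          have Sb: "(\<Sum>i\<in>I n. F (real i / real n) (d m + a n) \<omega>) \<le> real n * g"
            using HP[OF d0 dm nN1] unfolding I_def F_def by simp
          show ?thesis
          proof (cases "n = 0")
            case True then show ?thesis unfolding Y_def using g by simp
          next
            case False
            then have "real n > 0" by simp
            then have "(1 / real n) * (\<Sum>i\<in>I n. F (real i / real n) (d m + a n) \<omega>) \<le> (1 / real n) * (real n * g)"
              using Sb by (intro mult_left_mono) auto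
            then show ?thesis unfolding Y_def using \<open>real n > 0\<close> by simp
          qed
        qed
        then have "\<omega> \<in> A m" unfolding A_def using w by auto
        then show "\<omega> \<in> (\<Union>m. A m)" by blast
      qed
    qed
    define Bb where "Bb = (t+1) * Bq"
    have Bb0: "0 \<le> Bb" unfolding Bb_def using t Bq0 by simp
    have "(\<lambda>m. measure M (A m)) \<longlonglongrightarrow> measure M (\<Union>m. A m)"
      using Asets Ainc by (intro P.finite_Lim_measure_incseq) auto
    then have "(\<lambda>m. measure M (A m)) \<longlonglongrightarrow> 1" using Aun P.prob_space by simp
    moreover have "1 - g/(Bb+1) < (1::real)" using g Bb0 by simp
    ultimately have "eventually (\<lambda>m. 1 - g/(Bb+1) < measure M (A m)) sequentially"
      by (rule order_tendstoD(1))
    then obtain m0 where m0: "1 - g/(Bb+1) < measure M (A m0)" unfolding eventually_sequentially by blast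
    have "\<forall>\<epsilon>. 0 < \<epsilon> \<longrightarrow> \<epsilon> < d m0 \<longrightarrow> (\<forall>n\<ge>m0 + M0 + 1. n \<ge> 1 \<and> \<epsilon> + a n \<le> \<delta> \<and>
      (1 / real n) * (\<Sum>i\<in>I n. Qf (real i / real n) (\<epsilon> + a n)) \<le> 2*g)"
    proof (intro allI impI)
      fix \<epsilon> n assume e: "0 < \<epsilon>" "\<epsilon> < d m0" and n: "m0 + M0 + 1 \<le> n"
      have n1: "n \<ge> 1" and nM0: "n \<ge> M0" using n by auto
      have e2: "\<epsilon> \<le> \<delta>/2" using e d2[of m0] by linarith
      have \<eta>\<delta>: "\<epsilon> + a n \<le> \<delta>" using M0[OF nM0] e2 by linarith
      have Am: "A m0 \<in> sets M" by (rule Asets)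
      have [measurable]: "Y n (d m0) \<in> borel_measurable M" using Ymeas[OF nM0 d2] .
      have "(1 / real n) * (\<Sum>i\<in>I n. Qf (real i / real n) (\<epsilon> + a n)) = integral\<^sup>L M (Y n \<epsilon>)"
        by (rule sumQ[OF nM0 e2])
      also have "\<dots> \<le> integral\<^sup>L M (Y n (d m0))"
        using Yint[OF nM0 e2] Yint[OF nM0 d2] Ymono[OF nM0 d2] e by (intro integral_mono) auto
      also have "\<dots> \<le> integral\<^sup>L M (\<lambda>\<omega>. g + Bb * indicator (space M - A m0) \<omega>)"
      proof (rule integral_mono)
        show "integrable M (Y n (d m0))" using Yint[OF nM0 d2] .
        show "integrable M (\<lambda>\<omega>. g + Bb * indicator (space M - A m0) \<omega>)"
        proof (rule P.integrable_const_bound[where B="g + Bb"])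
          show "AE x in M. norm (g + Bb * indicator (space M - A m0) x) \<le> g + Bb"
            using g Bb0 by (auto simp: indicator_def)
          show "(\<lambda>\<omega>. g + Bb * indicator (space M - A m0) \<omega>) \<in> borel_measurable M"
            using Am by measurable
        qed
        fix \<omega> assume w: "\<omega> \<in> space M"
        show "Y n (d m0) \<omega> \<le> g + Bb * indicator (space M - A m0) \<omega>"
        proof (cases "\<omega> \<in> A m0")
          case True
          then have "Y n (d m0) \<omega> \<le> g" using n unfolding A_def by auto
          then show ?thesis using True by (simp add: indicator_def)
        next
          case False
          then have "Y n (d m0) \<omega> \<le> Bb" using Ybd[OF nM0 n1 d2 w] unfolding Bb_def by simp
          then show ?thesis using False w g by (simp add: indicator_def)
        qed
      qed
      also have "\<dots> = g + Bb * measure M (space M - A m0)"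
      proof -
        have mi: "indicator (space M - A m0) \<in> borel_measurable M" using Am by measurable
        have ii: "integrable M (indicator (space M - A m0) :: 'a \<Rightarrow> real)"
          by (rule P.integrable_const_bound[where B=1]) (use mi in \<open>auto simp: indicator_def\<close>)
        have "integral\<^sup>L M (\<lambda>\<omega>. g + Bb * indicator (space M - A m0) \<omega>)
            = integral\<^sup>L M (\<lambda>_. g) + integral\<^sup>L M (\<lambda>\<omega>. Bb * indicator (space M - A m0) \<omega>)"
          using ii by (intro Bochner_Integration.integral_add) auto
        also have "\<dots> = g + Bb * measure M (space M - A m0)"
        proof -
          show ?thesis using P.prob_space by (simp add: Int_absorb2 Diff_subset)
        qed
        finally show ?thesis .
      qed
      also have "\<dots> \<le> g + g"
      proof -
        have "measure M (space M - A m0) = 1 - measure M (A m0)" using P.prob_compl[OF Am] .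
        then have "measure M (space M - A m0) \<le> g/(Bb+1)" using m0 by linarith
        then have "Bb * measure M (space M - A m0) \<le> Bb * (g/(Bb+1))" using Bb0 by (intro mult_left_mono)
        also have "\<dots> \<le> g" using Bb0 g by (simp add: field_simps)
        finally show ?thesis by simp
      qed
      finally show "n \<ge> 1 \<and> \<epsilon> + a n \<le> \<delta> \<and>
        (1 / real n) * (\<Sum>i\<in>I n. Qf (real i / real n) (\<epsilon> + a n)) \<le> 2*g" using n1 \<eta>\<delta> by simp
    qed
    then show ?thesis using d0[of m0] by blast
  qed
  define S where "S \<epsilon> n = (1 / real n) * (\<Sum>i = k..nat \<lfloor>real n * t\<rfloor>.
               (Lq_norm M q (modcont \<sigma> (real i / real n) (\<epsilon> + a n))) powr \<alpha>)" for \<epsilon> n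
  have S0: "0 \<le> S \<epsilon> n" for \<epsilon> n unfolding S_def by (intro mult_nonneg_nonneg sum_nonneg) auto
  have Sbd: "\<exists>\<epsilon>0>0. \<forall>\<epsilon>. 0 < \<epsilon> \<longrightarrow> \<epsilon> < \<epsilon>0 \<longrightarrow> (\<exists>N. \<forall>n\<ge>N. S \<epsilon> n \<le> \<gamma>)" if \<gamma>: "\<gamma> > 0" for \<gamma>
  proof -
    define p where "p = \<alpha> / q"
    have p: "p > 0" unfolding p_def using \<alpha> q by simp
    define l where "l = (\<gamma>/(2*(t+1))) powr (1/p)"
    have l: "l > 0" unfolding l_def using \<gamma> t by simp
    have lp: "l powr p = \<gamma>/(2*(t+1))" unfolding l_def using \<gamma> t p by (simp add: powr_powr)
    define BP where "BP = Bq powr p"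
    have BP0: "0 \<le> BP" unfolding BP_def by simp
    define g where "g = \<gamma> * l / (4*(BP+1))"
    have g: "g > 0" unfolding g_def using \<gamma> l BP0 by simp
    obtain \<epsilon>0 N where \<epsilon>0: "\<epsilon>0 > 0" and HN: "\<And>\<epsilon> n. 0 < \<epsilon> \<Longrightarrow> \<epsilon> < \<epsilon>0 \<Longrightarrow> n \<ge> N \<Longrightarrow> n \<ge> 1 \<and> \<epsilon> + a n \<le> \<delta> \<and>
      (1 / real n) * (\<Sum>i\<in>I n. Qf (real i / real n) (\<epsilon> + a n)) \<le> 2*g"
      using claimE[OF g] by blast
    have "\<forall>\<epsilon>. 0 < \<epsilon> \<longrightarrow> \<epsilon> < \<epsilon>0 \<longrightarrow> (\<forall>n\<ge>N. S \<epsilon> n \<le> \<gamma>)"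
    proof (intro allI impI)
      fix \<epsilon> n assume e: "0 < \<epsilon>" "\<epsilon> < \<epsilon>0" and n: "N \<le> n"
      note H = HN[OF e n]
      have n1: "n \<ge> 1" and \<eta>\<delta>: "\<epsilon> + a n \<le> \<delta>" using H by auto
      have npos: "real n > 0" using n1 by simp
      have Lq: "Lq_norm M q (modcont \<sigma> s \<eta>) powr \<alpha> = Qf s \<eta> powr p" for s \<eta>
      proof -
        have "modcont \<sigma> s \<eta> = (\<lambda>\<omega>. mc (\<lambda>r. \<sigma> r \<omega>) s \<eta>)" by (rule ext) (rule modcont_mc)
        then have "Lq_norm M q (modcont \<sigma> s \<eta>) = Qf s \<eta> powr (1/q)"
          unfolding Lq_norm_def Qf_def F_def by simp
        then show ?thesis unfolding p_def by (simp add: powr_powr)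
      qed
      have "S \<epsilon> n = (1 / real n) * (\<Sum>i\<in>I n. Qf (real i / real n) (\<epsilon> + a n) powr p)"
        unfolding S_def I_def Lq by simp
      also have "\<dots> \<le> (1 / real n) * (\<Sum>i\<in>I n. l powr p + (Qf (real i / real n) (\<epsilon> + a n) / l) * BP)"
        unfolding BP_def using Qf_bd \<eta>\<delta> l p
        by (intro mult_left_mono sum_mono powr_split) auto
      also have "\<dots> = (real (card (I n)) / real n) * l powr p
           + (BP / l) * ((1 / real n) * (\<Sum>i\<in>I n. Qf (real i / real n) (\<epsilon> + a n)))"
        using l npos by (simp add: sum.distrib sum_divide_distrib[symmetric] sum_distrib_left[symmetric] field_simps)
      also have "\<dots> \<le> (t + 1) * l powr p + (BP / l) * (2*g)"
        using cardI2[OF n1] H BP0 l by (intro add_mono mult_right_mono mult_left_mono) auto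
      also have "\<dots> = \<gamma>/2 + \<gamma> * (BP / (2*(BP+1)))"
      proof -
        have "(t + 1) * (\<gamma>/(2*(t+1))) = \<gamma>/2" using t by (simp add: field_simps)
        moreover have "(BP / l) * (2*(\<gamma> * l / (4*(BP+1)))) = \<gamma> * (BP / (2*(BP+1)))"
        proof -
          have "BP + 1 \<noteq> 0" using BP0 by simp
          then show ?thesis using l by (simp add: field_simps)
        qed
        ultimately show ?thesis unfolding lp g_def by simp
      qed
      also have "\<dots> \<le> \<gamma>/2 + \<gamma> * (1/2)"
        using \<gamma> BP0 by (intro add_left_mono mult_left_mono) (auto simp: field_simps)
      finally show "S \<epsilon> n \<le> \<gamma>" by simp
    qed
    then show ?thesis using \<epsilon>0 by blast
  qed
  have "((\<lambda>\<epsilon>. limsup (\<lambda>n. ereal (S \<epsilon> n))) \<longlongrightarrow> 0) (at_right 0)"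
  proof (rule order_tendstoI)
    fix y :: ereal assume "y < 0"
    then show "eventually (\<lambda>\<epsilon>. y < limsup (\<lambda>n. ereal (S \<epsilon> n))) (at_right 0)"
    proof -
      have "0 \<le> limsup (\<lambda>n. ereal (S \<epsilon> n))" for \<epsilon>
        using S0 by (intro le_Limsup) auto
      then show ?thesis using \<open>y < 0\<close> by (simp add: order_less_le_trans)
    qed
  next
    fix y :: ereal assume "0 < y"
    then obtain \<gamma> where \<gamma>: "0 < ereal \<gamma>" "ereal \<gamma> < y" using ereal_dense2 by blast
    obtain \<epsilon>0 where \<epsilon>0: "\<epsilon>0 > 0" "\<And>\<epsilon>. 0 < \<epsilon> \<Longrightarrow> \<epsilon> < \<epsilon>0 \<Longrightarrow> \<exists>N. \<forall>n\<ge>N. S \<epsilon> n \<le> \<gamma>"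
      using Sbd[of \<gamma>] \<gamma> by auto
    have "limsup (\<lambda>n. ereal (S \<epsilon> n)) < y" if e: "0 < \<epsilon>" "\<epsilon> < \<epsilon>0" for \<epsilon>
    proof -
      obtain N where "\<forall>n\<ge>N. S \<epsilon> n \<le> \<gamma>" using \<epsilon>0(2)[OF e] by blast
      then have "limsup (\<lambda>n. ereal (S \<epsilon> n)) \<le> ereal \<gamma>"
        by (intro Limsup_bounded) (auto simp: eventually_sequentially)
      then show ?thesis using \<gamma>(2) by simp
    qed
    then show "eventually (\<lambda>\<epsilon>. limsup (\<lambda>n. ereal (S \<epsilon> n)) < y) (at_right 0)"
      unfolding eventually_at_right_field using \<epsilon>0(1) by (intro exI[of _ \<epsilon>0]) auto
  qed
  then show ?thesis unfolding S_def .
qed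


end
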